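(* Let $V\in{}_B\mathrm{Mod}^A$ and $W\in{}_A\mathrm{Mod}^C$. Then the DK-modules ${}_V\mathrm{Ind}(W)$ and $\mathrm{Ind}^W(V)$ (both with underlying space $V\odot W$, as described in the context) are isomorphic in ${}_B\mathrm{Mod}^C$.
   Context: $A$ is a CQG Hopf $*$-algebra: a complex Hopf algebra $(A,\Delta_A,\varepsilon_A,S_A)$ with an anti-linear involution making it a $*$-algebra with $\Delta_A$ a $*$-homomorphism, admitting a state $\Phi_A$ with $(\Phi_A\otimes\mathrm{id})\Delta_A(a)=\Phi_A(a)1=(\mathrm{id}\otimes\Phi_A)\Delta_A(a)$. $B\subseteq A$ is a unital right coideal $*$-subalgebra ($\Delta_A(B)\subseteq B\odot A$). Let $B_+=B\cap\ker\varepsilon_A$, $C=A/AB_+$ with quotient map $\pi_C$; $C$ is a coalgebra with comultiplication induced by $\Delta_A$ and a left $A$-module via $a\cdot\pi_C(a')=\pi_C(aa')$. Sweedler notation is used for coproducts and coactions ($\odot$ is the algebraic tensor product). For $(X,Y)\in\{(B,A),(A,C),(B,C)\}$, ${}_X\mathrm{Mod}^Y$ is the category of left $X$-modules $V$ with a right $Y$-comodule structure $v\mapsto v_{(0)}\otimes v_{(1)}$ such that $(xv)_{(0)}\otimes(xv)_{(1)}=x_{(1)}v_{(0)}\otimes x_{(2)}v_{(1)}$ (with $x_{(1)}\otimes x_{(2)}=\Delta_A(x)$ and $x_{(2)}v_{(1)}$ the product in $A$, resp. the $A$-action on $C$); morphisms are module and comodule maps. ${}_V\mathrm{Ind}(W)$: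 $V\odot W$ with $b(v\otimes w)=bv\otimes w$ and coaction $v\otimes w\mapsto v_{(0)}\otimes w_{(0)}\otimes v_{(1)}w_{(1)}$. $\mathrm{Ind}^W(V)$: $V\odot W$ with $b(v\otimes w)=b_{(1)}v\otimes b_{(2)}w$ and coaction $v\otimes w\mapsto v\otimes w_{(0)}\otimes w_{(1)}$. (Both are objects of ${}_B\mathrm{Mod}^C$.) *)

theory Defs
  imports Complex_Main
begin

class cscale = fixes cscale :: "complex \<Rightarrow> 'a \<Rightarrow> 'a" (infixr "\<cdot>\<^sub>C" 75)

class cvec = ab_group_add + cscale +
  assumes cscale_add_right: "c \<cdot>\<^sub>C (x + y) = c \<cdot>\<^sub>C x + c \<cdot>\<^sub>C y"
      and cscale_add_left: "(c + d) \<cdot>\<^sub>C x = c \<cdot>\<^sub>C x + d \<cdot>\<^sub>C x"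
      and cscale_cscale: "c \<cdot>\<^sub>C (d \<cdot>\<^sub>C x) = (c * d) \<cdot>\<^sub>C x"
      and cscale_one: "1 \<cdot>\<^sub>C x = x"

class calg = ring_1 + cvec +
  assumes cscale_mult_left: "c \<cdot>\<^sub>C (x * y) = (c \<cdot>\<^sub>C x) * y"
      and cscale_mult_right: "c \<cdot>\<^sub>C (x * y) = x * (c \<cdot>\<^sub>C y)"

instantiation complex :: calg
begin
definition cscale_complex :: "complex \<Rightarrow> complex \<Rightarrow> complex" where
  "cscale_complex c x = c * x"
instance by standard (simp_all add: cscale_complex_def algebra_simps)
end

definition clinear :: "('a::{plus,cscale} \<Rightarrow> 'b::{plus,cscale}) \<Rightarrow> bool" where
  "clinear f \<longleftrightarrow> (\<forall>x y. f (x + y) = f x + f y) \<and> (\<forall>c x. f (c \<cdot>\<^sub>C x) = c \<cdot>\<^sub>C f x)"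

text \<open>finite sums without algebraic class axioms\<close>
definition lsum :: "'a::{zero,plus} list \<Rightarrow> 'a" where
  "lsum xs = foldr (+) xs 0"

definition cspan :: "'a::{zero,plus,cscale} set \<Rightarrow> 'a set" where
  "cspan S = {lsum (map (\<lambda>(c,s). c \<cdot>\<^sub>C s) xs) | xs. set (map snd xs) \<subseteq> S}"

text \<open>Presentation of \<open>V \<odot> W\<close> as the commutative monoid of formal finite sums
  \<open>\<Sum> v_i \<otimes> w_i\<close> modulo biadditivity, zero and \<open>\<complex>\<close>-balancedness.\<close>

inductive teq :: "('a::{zero,plus,cscale} \<times> 'b::{zero,plus,cscale}) list \<Rightarrow> ('a \<times> 'b) list \<Rightarrow> bool" where
  teq_refl: "teq xs xs"
| teq_sym: "teq xs ys \<Longrightarrow> teq ys xs"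
| teq_trans: "teq xs ys \<Longrightarrow> teq ys zs \<Longrightarrow> teq xs zs"
| teq_app: "teq xs xs' \<Longrightarrow> teq ys ys' \<Longrightarrow> teq (xs @ ys) (xs' @ ys')"
| teq_swap: "teq (xs @ ys) (ys @ xs)"
| teq_zero_l: "teq [(0, w)] []"
| teq_zero_r: "teq [(v, 0)] []"
| teq_add_l: "teq [(v + v', w)] [(v, w), (v', w)]"
| teq_add_r: "teq [(v, w + w')] [(v, w), (v, w')]"
| teq_bal: "teq [(c \<cdot>\<^sub>C v, w)] [(v, c \<cdot>\<^sub>C w)]"

quotient_type (overloaded) ('a, 'b) tensor =
  "('a::{zero,plus,cscale} \<times> 'b::{zero,plus,cscale}) list" / teq
  morphisms Rep_tensor Abs_tensor
  by (rule equivpI; rule reflpI sympI transpI)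
     (auto intro: teq_refl teq_sym teq_trans)

definition tens :: "'a::{zero,plus,cscale} \<Rightarrow> 'b::{zero,plus,cscale} \<Rightarrow> ('a, 'b) tensor" where
  "tens v w = Abs_tensor [(v, w)]"

text \<open>The linear map \<open>V \<odot> W \<rightarrow> X\<close> induced by a bilinear balanced map \<open>\<beta>\<close>,
  evaluated on any representative \<open>\<Sum> v_i \<otimes> w_i\<close>.\<close>
definition tlift :: "('a::{zero,plus,cscale} \<Rightarrow> 'b::{zero,plus,cscale} \<Rightarrow> 'c::{zero,plus})
    \<Rightarrow> ('a, 'b) tensor \<Rightarrow> 'c" where
  "tlift \<beta> t = lsum (map (\<lambda>(v, w). \<beta> v w) (Rep_tensor t))"

instantiation tensor :: ("{zero,plus,cscale}", "{zero,plus,cscale}") "{zero,plus,cscale,uminus,minus}"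
begin
definition zero_tensor :: "('a, 'b) tensor" where "zero_tensor = Abs_tensor []"
definition plus_tensor :: "('a, 'b) tensor \<Rightarrow> ('a, 'b) tensor \<Rightarrow> ('a, 'b) tensor" where
  "plus_tensor s t = Abs_tensor (Rep_tensor s @ Rep_tensor t)"
definition cscale_tensor :: "complex \<Rightarrow> ('a, 'b) tensor \<Rightarrow> ('a, 'b) tensor" where
  "cscale_tensor c t = Abs_tensor (map (\<lambda>(v, w). (c \<cdot>\<^sub>C v, w)) (Rep_tensor t))"
definition uminus_tensor :: "('a, 'b) tensor \<Rightarrow> ('a, 'b) tensor" where
  "uminus_tensor t = (-1) \<cdot>\<^sub>C t"
definition minus_tensor :: "('a, 'b) tensor \<Rightarrow> ('a, 'b) tensor \<Rightarrow> ('a, 'b) tensor" where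
  "minus_tensor s t = s + (- t)"
instance ..
end

definition tmap :: "('a::{zero,plus,cscale} \<Rightarrow> 'c::{zero,plus,cscale}) \<Rightarrow>
    ('b::{zero,plus,cscale} \<Rightarrow> 'd::{zero,plus,cscale}) \<Rightarrow> ('a, 'b) tensor \<Rightarrow> ('c, 'd) tensor" where
  "tmap f g = tlift (\<lambda>x y. tens (f x) (g y))"

definition tassoc :: "(('a::{zero,plus,cscale}, 'b::{zero,plus,cscale}) tensor, 'c::{zero,plus,cscale}) tensor
    \<Rightarrow> ('a, ('b, 'c) tensor) tensor" where
  "tassoc = tlift (\<lambda>t z. tlift (\<lambda>x y. tens x (tens y z)) t)"

definition tmult :: "('a::{zero,plus,cscale,times}, 'b::{zero,plus,cscale,times}) tensor
    \<Rightarrow> ('a, 'b) tensor \<Rightarrow> ('a, 'b) tensor" where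
  "tmult s t = tlift (\<lambda>a b. tlift (\<lambda>a' b'. tens (a * a') (b * b')) t) s"

definition hopf_algebra :: "('a::calg \<Rightarrow> ('a, 'a) tensor) \<Rightarrow> ('a \<Rightarrow> complex) \<Rightarrow> ('a \<Rightarrow> 'a) \<Rightarrow> bool" where
  "hopf_algebra \<Delta> \<epsilon> S \<longleftrightarrow>
     clinear \<Delta> \<and> clinear \<epsilon> \<and> clinear S \<and>
     \<Delta> 1 = tens 1 1 \<and> (\<forall>x y. \<Delta> (x * y) = tmult (\<Delta> x) (\<Delta> y)) \<and>
     \<epsilon> 1 = 1 \<and> (\<forall>x y. \<epsilon> (x * y) = \<epsilon> x * \<epsilon> y) \<and>
     (\<forall>x. tassoc (tmap \<Delta> id (\<Delta> x)) = tmap id \<Delta> (\<Delta> x)) \<and>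
     (\<forall>x. tlift (\<lambda>a b. \<epsilon> a \<cdot>\<^sub>C b) (\<Delta> x) = x) \<and>
     (\<forall>x. tlift (\<lambda>a b. \<epsilon> b \<cdot>\<^sub>C a) (\<Delta> x) = x) \<and>
     (\<forall>x. tlift (\<lambda>a b. S a * b) (\<Delta> x) = \<epsilon> x \<cdot>\<^sub>C 1) \<and>
     (\<forall>x. tlift (\<lambda>a b. a * S b) (\<Delta> x) = \<epsilon> x \<cdot>\<^sub>C 1)"

definition star_hopf_algebra :: "('a::calg \<Rightarrow> ('a, 'a) tensor) \<Rightarrow> ('a \<Rightarrow> complex) \<Rightarrow> ('a \<Rightarrow> 'a)
    \<Rightarrow> ('a \<Rightarrow> 'a) \<Rightarrow> bool" where
  "star_hopf_algebra \<Delta> \<epsilon> S star \<longleftrightarrow>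
     hopf_algebra \<Delta> \<epsilon> S \<and>
     (\<forall>x y. star (x + y) = star x + star y) \<and>
     (\<forall>c x. star (c \<cdot>\<^sub>C x) = cnj c \<cdot>\<^sub>C star x) \<and>
     (\<forall>x y. star (x * y) = star y * star x) \<and>
     (\<forall>x. star (star x) = x) \<and>
     (\<forall>x. \<Delta> (star x) = tmap star star (\<Delta> x))"

definition is_state :: "('a::calg \<Rightarrow> 'a) \<Rightarrow> ('a \<Rightarrow> complex) \<Rightarrow> bool" where
  "is_state star \<Phi> \<longleftrightarrow> clinear \<Phi> \<and> \<Phi> 1 = 1 \<and>
     (\<forall>a. Im (\<Phi> (star a * a)) = 0 \<and> Re (\<Phi> (star a * a)) \<ge> 0)"

definition cqg_hopf_star_algebra :: "('a::calg \<Rightarrow> ('a, 'a) tensor) \<Rightarrow> ('a \<Rightarrow> complex) \<Rightarrow> ('a \<Rightarrow> 'a)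
    \<Rightarrow> ('a \<Rightarrow> 'a) \<Rightarrow> bool" where
  "cqg_hopf_star_algebra \<Delta> \<epsilon> S star \<longleftrightarrow>
     star_hopf_algebra \<Delta> \<epsilon> S star \<and>
     (\<exists>\<Phi>. is_state star \<Phi> \<and>
        (\<forall>a. tlift (\<lambda>x y. \<Phi> x \<cdot>\<^sub>C y) (\<Delta> a) = \<Phi> a \<cdot>\<^sub>C 1) \<and>
        (\<forall>a. tlift (\<lambda>x y. \<Phi> y \<cdot>\<^sub>C x) (\<Delta> a) = \<Phi> a \<cdot>\<^sub>C 1))"

section \<open>Right coideal *-subalgebras and the quotient coalgebra \<open>C = A / A B_+\<close>\<close>

text \<open>\<open>\<Delta>(b) \<in> B \<odot> A\<close>: \<open>\<Delta>(b)\<close> has a representative \<open>\<Sum> b_i \<otimes> a_i\<close> with all \<open>b_i \<in> B\<close>\<close>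
definition in_B_odot_A :: "'a::calg set \<Rightarrow> ('a, 'a) tensor \<Rightarrow> bool" where
  "in_B_odot_A B t \<longleftrightarrow> (\<exists>xs. set (map fst xs) \<subseteq> B \<and> t = Abs_tensor xs)"

definition right_coideal_star_subalgebra :: "('a::calg \<Rightarrow> ('a, 'a) tensor) \<Rightarrow> ('a \<Rightarrow> 'a) \<Rightarrow> 'a set \<Rightarrow> bool" where
  "right_coideal_star_subalgebra \<Delta> star B \<longleftrightarrow>
     1 \<in> B \<and> (\<forall>x\<in>B. \<forall>y\<in>B. x + y \<in> B \<and> x * y \<in> B) \<and>
     (\<forall>c. \<forall>x\<in>B. c \<cdot>\<^sub>C x \<in> B) \<and> (\<forall>x\<in>B. star x \<in> B) \<and>
     (\<forall>b\<in>B. in_B_odot_A B (\<Delta> b))"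

text \<open>a chosen representative of \<open>\<Delta>(b)\<close> in \<open>B \<odot> A\<close> (used for the Sweedler notation
  \<open>b_{(1)} \<otimes> b_{(2)}\<close> when \<open>b_{(1)}\<close> acts on a \<open>B\<close>-module)\<close>
definition crep :: "'a::calg set \<Rightarrow> ('a \<Rightarrow> ('a, 'a) tensor) \<Rightarrow> 'a \<Rightarrow> ('a \<times> 'a) list" where
  "crep B \<Delta> b = (SOME xs. set (map fst xs) \<subseteq> B \<and> \<Delta> b = Abs_tensor xs)"

text \<open>\<open>\<pi>\<^sub>C : A \<rightarrow> C\<close> is the quotient map with kernel \<open>A B_+\<close>; \<open>\<Delta>\<^sub>C, \<epsilon>\<^sub>C\<close> the induced coalgebra
  structure and \<open>actC\<close> the induced left \<open>A\<close>-module structure on \<open>C\<close>.\<close>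
definition quotient_coalgebra :: "('a::calg \<Rightarrow> ('a, 'a) tensor) \<Rightarrow> ('a \<Rightarrow> complex) \<Rightarrow> 'a set
    \<Rightarrow> ('a \<Rightarrow> 'c::cvec) \<Rightarrow> ('c \<Rightarrow> ('c, 'c) tensor) \<Rightarrow> ('c \<Rightarrow> complex) \<Rightarrow> ('a \<Rightarrow> 'c \<Rightarrow> 'c) \<Rightarrow> bool" where
  "quotient_coalgebra \<Delta> \<epsilon> B \<pi> \<Delta>C \<epsilon>C actC \<longleftrightarrow>
     clinear \<pi> \<and> surj \<pi> \<and>
     (\<forall>a. \<pi> a = 0 \<longleftrightarrow> a \<in> cspan {x * b | x b. b \<in> B \<and> \<epsilon> b = 0}) \<and>
     (\<forall>a. \<Delta>C (\<pi> a) = tmap \<pi> \<pi> (\<Delta> a)) \<and>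
     (\<forall>a. \<epsilon>C (\<pi> a) = \<epsilon> a) \<and>
     (\<forall>a a'. actC a (\<pi> a') = \<pi> (a * a'))"

definition left_B_module :: "'a::calg set \<Rightarrow> ('a \<Rightarrow> 'v::cvec \<Rightarrow> 'v) \<Rightarrow> bool" where
  "left_B_module B act \<longleftrightarrow>
     (\<forall>b\<in>B. clinear (act b)) \<and>
     (\<forall>b\<in>B. \<forall>b'\<in>B. \<forall>v. act (b + b') v = act b v + act b' v \<and> act (b * b') v = act b (act b' v)) \<and>
     (\<forall>c. \<forall>b\<in>B. \<forall>v. act (c \<cdot>\<^sub>C b) v = c \<cdot>\<^sub>C act b v) \<and>
     (\<forall>v. act 1 v = v)"

definition right_comodule :: "('x::calg \<Rightarrow> ('x, 'x) tensor) \<Rightarrow> ('x \<Rightarrow> complex) \<Rightarrow>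
    ('v::cvec \<Rightarrow> ('v, 'x) tensor) \<Rightarrow> bool" where
  "right_comodule \<Delta> \<epsilon> \<rho> \<longleftrightarrow> clinear \<rho> \<and>
     (\<forall>v. tassoc (tmap \<rho> id (\<rho> v)) = tmap id \<Delta> (\<rho> v)) \<and>
     (\<forall>v. tlift (\<lambda>v0 x. \<epsilon> x \<cdot>\<^sub>C v0) (\<rho> v) = v)"

text \<open>right comodule over the coalgebra \<open>C\<close> (which is not an algebra)\<close>
definition right_C_comodule :: "('c::cvec \<Rightarrow> ('c, 'c) tensor) \<Rightarrow> ('c \<Rightarrow> complex) \<Rightarrow>
    ('w::cvec \<Rightarrow> ('w, 'c) tensor) \<Rightarrow> bool" where
  "right_C_comodule \<Delta>C \<epsilon>C \<rho> \<longleftrightarrow> clinear \<rho> \<and>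
     (\<forall>w. tassoc (tmap \<rho> id (\<rho> w)) = tmap id \<Delta>C (\<rho> w)) \<and>
     (\<forall>w. tlift (\<lambda>w0 c. \<epsilon>C c \<cdot>\<^sub>C w0) (\<rho> w) = w)"

definition Mod_BA :: "('a::calg \<Rightarrow> ('a, 'a) tensor) \<Rightarrow> ('a \<Rightarrow> complex) \<Rightarrow> 'a set \<Rightarrow>
    ('a \<Rightarrow> 'v::cvec \<Rightarrow> 'v) \<Rightarrow> ('v \<Rightarrow> ('v, 'a) tensor) \<Rightarrow> bool" where
  "Mod_BA \<Delta> \<epsilon> B act \<rho> \<longleftrightarrow> left_B_module B act \<and> right_comodule \<Delta> \<epsilon> \<rho> \<and>
     (\<forall>b\<in>B. \<forall>v. \<rho> (act b v) =
        lsum (map (\<lambda>(b1, b2). tlift (\<lambda>v0 a. tens (act b1 v0) (b2 * a)) (\<rho> v)) (crep B \<Delta> b)))"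

definition Mod_AC :: "('a::calg \<Rightarrow> ('a, 'a) tensor) \<Rightarrow> ('c::cvec \<Rightarrow> ('c, 'c) tensor) \<Rightarrow> ('c \<Rightarrow> complex)
    \<Rightarrow> ('a \<Rightarrow> 'c \<Rightarrow> 'c) \<Rightarrow> ('a \<Rightarrow> 'w::cvec \<Rightarrow> 'w) \<Rightarrow> ('w \<Rightarrow> ('w, 'c) tensor) \<Rightarrow> bool" where
  "Mod_AC \<Delta> \<Delta>C \<epsilon>C actC act \<rho> \<longleftrightarrow> left_B_module UNIV act \<and> right_C_comodule \<Delta>C \<epsilon>C \<rho> \<and>
     (\<forall>a w. \<rho> (act a w) =
        tlift (\<lambda>a1 a2. tlift (\<lambda>w0 c. tens (act a1 w0) (actC a2 c)) (\<rho> w)) (\<Delta> a))"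

text \<open>\<open>\<^sub>V Ind(W)\<close>: \<open>b(v \<otimes> w) = bv \<otimes> w\<close>, \<open>v \<otimes> w \<mapsto> v_{(0)} \<otimes> w_{(0)} \<otimes> v_{(1)} w_{(1)}\<close>\<close>
definition indV_act :: "('a \<Rightarrow> 'v::cvec \<Rightarrow> 'v) \<Rightarrow> 'a \<Rightarrow> ('v, 'w::cvec) tensor \<Rightarrow> ('v, 'w) tensor" where
  "indV_act actV b = tlift (\<lambda>v w. tens (actV b v) w)"

definition indV_coact :: "('v::cvec \<Rightarrow> ('v, 'a::calg) tensor) \<Rightarrow> ('w::cvec \<Rightarrow> ('w, 'c::cvec) tensor)
    \<Rightarrow> ('a \<Rightarrow> 'c \<Rightarrow> 'c) \<Rightarrow> ('v, 'w) tensor \<Rightarrow> (('v, 'w) tensor, 'c) tensor" where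
  "indV_coact \<rho>V \<rho>W actC = tlift (\<lambda>v w.
      tlift (\<lambda>v0 a. tlift (\<lambda>w0 c. tens (tens v0 w0) (actC a c)) (\<rho>W w)) (\<rho>V v))"

text \<open>\<open>Ind\<^sup>W(V)\<close>: \<open>b(v \<otimes> w) = b_{(1)} v \<otimes> b_{(2)} w\<close>, \<open>v \<otimes> w \<mapsto> v \<otimes> w_{(0)} \<otimes> w_{(1)}\<close>\<close>
definition indW_act :: "'a::calg set \<Rightarrow> ('a \<Rightarrow> ('a, 'a) tensor) \<Rightarrow> ('a \<Rightarrow> 'v::cvec \<Rightarrow> 'v)
    \<Rightarrow> ('a \<Rightarrow> 'w::cvec \<Rightarrow> 'w) \<Rightarrow> 'a \<Rightarrow> ('v, 'w) tensor \<Rightarrow> ('v, 'w) tensor" where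
  "indW_act B \<Delta> actV actW b = tlift (\<lambda>v w.
      lsum (map (\<lambda>(b1, b2). tens (actV b1 v) (actW b2 w)) (crep B \<Delta> b)))"

definition indW_coact :: "('w::cvec \<Rightarrow> ('w, 'c::cvec) tensor) \<Rightarrow> ('v::cvec, 'w) tensor
    \<Rightarrow> (('v, 'w) tensor, 'c) tensor" where
  "indW_coact \<rho>W = tlift (\<lambda>v w. tlift (\<lambda>w0 c. tens (tens v w0) c) (\<rho>W w))"

definition iso_BModC :: "'a set \<Rightarrow> ('a \<Rightarrow> 'x::{zero,plus,cscale} \<Rightarrow> 'x) \<Rightarrow> ('x \<Rightarrow> ('x, 'c::{zero,plus,cscale}) tensor)
    \<Rightarrow> ('a \<Rightarrow> 'y::{zero,plus,cscale} \<Rightarrow> 'y) \<Rightarrow> ('y \<Rightarrow> ('y, 'c) tensor) \<Rightarrow> bool" where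
  "iso_BModC B act1 co1 act2 co2 \<longleftrightarrow>
     (\<exists>f g. clinear f \<and> clinear g \<and> (\<forall>x. g (f x) = x) \<and> (\<forall>y. f (g y) = y) \<and>
        (\<forall>b\<in>B. \<forall>x. f (act1 b x) = act2 b (f x)) \<and>
        (\<forall>b\<in>B. \<forall>y. g (act2 b y) = act1 b (g y)) \<and>
        (\<forall>x. co2 (f x) = tmap f id (co1 x)) \<and>
        (\<forall>y. co1 (g y) = tmap g id (co2 y)))"

end

theory Submission
  imports Defs
begin


lemma lsum_eq[simp]: "lsum xs = sum_list (xs::'a::monoid_add list)"
  by (simp add: lsum_def sum_list.eq_foldr)

lemma abs_rep_t[simp]: "Abs_tensor (Rep_tensor t) = t"
  by (rule Quotient3_abs_rep[OF Quotient3_tensor])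
lemma rep_abs_t: "teq (Rep_tensor (Abs_tensor xs)) xs"
  by (rule Quotient3_rep_abs[OF Quotient3_tensor]) (rule teq_refl)
lemma Abs_eq_iff: "Abs_tensor xs = Abs_tensor ys \<longleftrightarrow> teq xs ys"
  using Quotient3_rel[OF Quotient3_tensor, of xs ys] by (auto intro: teq_refl)

lemma plus_Abs: "Abs_tensor xs + Abs_tensor ys = Abs_tensor (xs @ ys)"
  unfolding plus_tensor_def Abs_eq_iff by (intro teq_app rep_abs_t)

lemma cvec_zero: "(0::complex) \<cdot>\<^sub>C (x::'a::cvec) = 0"
proof -
  have "0 \<cdot>\<^sub>C x = 0 \<cdot>\<^sub>C x + (0 \<cdot>\<^sub>C x :: 'a)" using cscale_add_left[of 0 0 x] by simp
  thus ?thesis by simp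
qed
lemma cvec_zero_r: "c \<cdot>\<^sub>C (0::'a::cvec) = 0"
proof -
  have "c \<cdot>\<^sub>C 0 = c \<cdot>\<^sub>C 0 + (c \<cdot>\<^sub>C 0 :: 'a)" using cscale_add_right[of c 0 0] by simp
  thus ?thesis by simp
qed
lemma cvec_neg: "(-1::complex) \<cdot>\<^sub>C (x::'a::cvec) + x = 0"
  using cscale_add_left[of "-1" 1 x] by (simp add: cvec_zero cscale_one)

definition mapc :: "complex \<Rightarrow> ('a::{zero,plus,cscale} \<times> 'b::{zero,plus,cscale}) list \<Rightarrow> ('a \<times> 'b) list" where
  "mapc c = map (\<lambda>(v, w). (c \<cdot>\<^sub>C v, w))"

lemma mapc_teq: "teq xs ys \<Longrightarrow> teq (mapc c xs) (mapc c (ys::('a::cvec \<times> 'b::cvec) list))"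
proof (induction rule: teq.induct)
  case (teq_bal d v w)
  have "teq [(d \<cdot>\<^sub>C (c \<cdot>\<^sub>C v), w)] [(c \<cdot>\<^sub>C v, d \<cdot>\<^sub>C w)]" by (rule teq.teq_bal)
  then show ?case by (simp add: mapc_def cscale_cscale mult.commute)
qed (auto simp: mapc_def cvec_zero_r cscale_add_right intro: teq.intros)

lemma cscale_Abs: "c \<cdot>\<^sub>C Abs_tensor xs = Abs_tensor (mapc c (xs::('a::cvec \<times> 'b::cvec) list))"
  unfolding cscale_tensor_def Abs_eq_iff using mapc_teq[OF rep_abs_t, of c xs]
  by (simp add: mapc_def)

lemma tensor_ex: "\<exists>xs. t = Abs_tensor xs"
  by (metis abs_rep_t)

lemma Abs_Cons: "Abs_tensor (x # xs) = Abs_tensor [x] + Abs_tensor xs"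
  by (simp add: plus_Abs)

instance tensor :: (cvec, cvec) ab_group_add
proof
  fix a b c :: "('a,'b) tensor"
  obtain xs ys zs where a: "a = Abs_tensor xs" and b: "b = Abs_tensor ys" and c: "c = Abs_tensor zs"
    using tensor_ex by blast
  show "a + b + c = a + (b + c)"
    by (simp add: a b c plus_Abs)
  show "a + b = b + a"
    by (simp add: a b plus_Abs Abs_eq_iff teq_swap)
  show "0 + a = a"
    by (simp add: a plus_Abs zero_tensor_def)
  show "a - b = a + - b" by (simp add: minus_tensor_def)
  have neg: "Abs_tensor (mapc (-1) xs) + Abs_tensor xs = 0" for xs :: "('a \<times> 'b) list"
  proof (induction xs)
    case Nil then show ?case by (simp add: mapc_def plus_Abs zero_tensor_def)
  next
    case (Cons x xs)
    obtain v w where x: "x = (v, w)" by force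
    have "Abs_tensor [((-1) \<cdot>\<^sub>C v, w)] + Abs_tensor [(v, w)] = Abs_tensor [((-1) \<cdot>\<^sub>C v + v, w)]"
      by (simp add: plus_Abs Abs_eq_iff teq_add_l teq_sym)
    also have "\<dots> = 0" by (simp add: cvec_neg zero_tensor_def Abs_eq_iff teq_zero_l)
    finally have 1: "Abs_tensor [((-1) \<cdot>\<^sub>C v, w)] + Abs_tensor [(v, w)] = 0" .
    have "Abs_tensor (mapc (-1) (x # xs)) + Abs_tensor (x # xs)
        = (Abs_tensor [((-1) \<cdot>\<^sub>C v, w)] + Abs_tensor [(v, w)]) + (Abs_tensor (mapc (-1) xs) + Abs_tensor xs)"
      by (simp add: x mapc_def plus_Abs Abs_eq_iff)
         (metis append_Cons append_Nil append_assoc teq_app teq_refl teq_swap)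
    also have "\<dots> = 0 + 0" by (simp only: 1 Cons.IH)
    also have "\<dots> = 0" by (simp add: zero_tensor_def plus_Abs)
    finally show ?case .
  qed
  show "- a + a = 0"
    by (simp add: a neg uminus_tensor_def cscale_Abs)
qed

instance tensor :: (cvec, cvec) cvec
proof
  fix a b c :: "('a,'b) tensor" and d e :: complex
  obtain xs ys where a: "a = Abs_tensor xs" and b: "b = Abs_tensor ys"
    using tensor_ex by blast
  show "d \<cdot>\<^sub>C (a + b) = d \<cdot>\<^sub>C a + d \<cdot>\<^sub>C b"
    by (simp add: a b plus_Abs cscale_Abs mapc_def)
  have distl: "Abs_tensor (mapc (d + e) xs) = Abs_tensor (mapc d xs) + Abs_tensor (mapc e xs)" for xs :: "('a \<times> 'b) list"
  proof (induction xs)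
    case Nil then show ?case by (simp add: mapc_def plus_Abs)
  next
    case (Cons x xs)
    obtain v w where x: "x = (v, w)" by force
    have 1: "Abs_tensor [((d+e) \<cdot>\<^sub>C v, w)] = Abs_tensor [(d \<cdot>\<^sub>C v, w)] + Abs_tensor [(e \<cdot>\<^sub>C v, w)]"
      by (simp add: plus_Abs Abs_eq_iff teq_add_l cscale_add_left)
    have e: "Abs_tensor (mapc k (x # xs)) = Abs_tensor [(k \<cdot>\<^sub>C v, w)] + Abs_tensor (mapc k xs)" for k
      by (simp add: x mapc_def plus_Abs)
    show ?case by (simp add: e 1 Cons.IH algebra_simps)
  qed
  show "(d + e) \<cdot>\<^sub>C a = d \<cdot>\<^sub>C a + e \<cdot>\<^sub>C a"
    by (simp add: a cscale_Abs distl)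
  show "d \<cdot>\<^sub>C e \<cdot>\<^sub>C a = (d * e) \<cdot>\<^sub>C a"
    by (simp add: a cscale_Abs mapc_def cscale_cscale comp_def split_def)
  show "1 \<cdot>\<^sub>C a = a"
    by (simp add: a cscale_Abs mapc_def cscale_one)
qed


definition bil :: "('a::cvec \<Rightarrow> 'b::cvec \<Rightarrow> 'c::cvec) \<Rightarrow> bool" where
  "bil \<beta> \<longleftrightarrow> (\<forall>x x' y. \<beta> (x + x') y = \<beta> x y + \<beta> x' y) \<and> (\<forall>x y y'. \<beta> x (y + y') = \<beta> x y + \<beta> x y')
     \<and> (\<forall>c x y. \<beta> (c \<cdot>\<^sub>C x) y = c \<cdot>\<^sub>C \<beta> x y) \<and> (\<forall>c x y. \<beta> x (c \<cdot>\<^sub>C y) = c \<cdot>\<^sub>C \<beta> x y)"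

lemma bilI:
  assumes "\<And>x x' y. \<beta> (x + x') y = \<beta> x y + \<beta> x' y" "\<And>x y y'. \<beta> x (y + y') = \<beta> x y + \<beta> x y'"
    "\<And>c x y. \<beta> (c \<cdot>\<^sub>C x) y = c \<cdot>\<^sub>C \<beta> x y" "\<And>c x y. \<beta> x (c \<cdot>\<^sub>C y) = c \<cdot>\<^sub>C \<beta> x y"
  shows "bil \<beta>" using assms unfolding bil_def by blast

lemma bilD: assumes "bil \<beta>" shows "\<beta> (x + x') y = \<beta> x y + \<beta> x' y" "\<beta> x (y + y') = \<beta> x y + \<beta> x y'"
    "\<beta> (c \<cdot>\<^sub>C x) y = c \<cdot>\<^sub>C \<beta> x y" "\<beta> x (c \<cdot>\<^sub>C y) = c \<cdot>\<^sub>C \<beta> x y"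
  using assms unfolding bil_def by blast+

lemma add_zero_map: fixes L :: "'a::ab_group_add \<Rightarrow> 'b::ab_group_add" assumes "\<And>a b. L (a + b) = L a + L b" shows "L 0 = 0"
proof -
  have "L 0 = L 0 + L 0" using assms[of 0 0] by simp
  thus ?thesis by simp
qed

lemma bil_zero: assumes "bil \<beta>" shows "\<beta> 0 y = 0" "\<beta> x 0 = 0"
  using add_zero_map[of "\<lambda>x. \<beta> x y"] add_zero_map[of "\<beta> x"] bilD[OF assms] by blast+

lemma clinearD: assumes "clinear f" shows "f (x + y) = f x + f y" "f (c \<cdot>\<^sub>C x) = c \<cdot>\<^sub>C f x"
  using assms unfolding clinear_def by blast+

lemma clinearI: assumes "\<And>x y. f (x + y) = f x + f y" "\<And>c x. f (c \<cdot>\<^sub>C x) = c \<cdot>\<^sub>C f x"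
  shows "clinear f" using assms unfolding clinear_def by blast

lemma clinear_zero: "clinear (f::'a::cvec \<Rightarrow> 'b::cvec) \<Longrightarrow> f 0 = (0::'b::cvec)"
  by (rule add_zero_map[of f]) (simp add: clinearD)

lemma teq_sum:
  assumes "teq xs ys" "bil \<beta>"
  shows "sum_list (map (case_prod \<beta>) xs) = sum_list (map (case_prod \<beta>) ys)"
  using assms(1)
proof (induction rule: teq.induct)
  case (teq_bal c v w) then show ?case using bilD[OF assms(2)] by simp
next
  case (teq_swap xs ys) then show ?case by (simp add: add.commute)
qed (simp_all add: bil_zero[OF assms(2)] bilD[OF assms(2)])

lemma tlift_def': "tlift \<beta> t = sum_list (map (case_prod \<beta>) (Rep_tensor t))"
  by (simp add: tlift_def)

lemma tlift_Abs: "bil \<beta> \<Longrightarrow> tlift \<beta> (Abs_tensor xs) = sum_list (map (case_prod \<beta>) xs)"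
  unfolding tlift_def' by (rule teq_sum[OF rep_abs_t])

lemma tlift_tens[simp]: "bil \<beta> \<Longrightarrow> tlift \<beta> (tens x y) = \<beta> x y"
  by (simp add: tens_def tlift_Abs)

lemma tlift_add: "bil \<beta> \<Longrightarrow> tlift \<beta> (s + t) = tlift \<beta> s + tlift \<beta> t"
proof -
  assume b: "bil \<beta>"
  obtain xs ys where s: "s = Abs_tensor xs" and t: "t = Abs_tensor ys" using tensor_ex by blast
  show ?thesis by (simp add: s t plus_Abs tlift_Abs[OF b])
qed

lemma sum_list_scale: "c \<cdot>\<^sub>C sum_list xs = sum_list (map (\<lambda>x. c \<cdot>\<^sub>C x) (xs::'a::cvec list))"
  by (induction xs) (simp_all add: cvec_zero_r cscale_add_right)

lemma tlift_scale: "bil \<beta> \<Longrightarrow> tlift \<beta> (c \<cdot>\<^sub>C t) = c \<cdot>\<^sub>C tlift \<beta> t"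
proof -
  assume b: "bil \<beta>"
  obtain xs where t: "t = Abs_tensor xs" using tensor_ex by blast
  show ?thesis using b
    by (simp add: t cscale_Abs tlift_Abs mapc_def sum_list_scale bilD comp_def case_prod_beta)
qed

lemma tlift_zero: "bil \<beta> \<Longrightarrow> tlift \<beta> 0 = 0"
  by (simp add: zero_tensor_def tlift_Abs)

lemma clinear_tlift: "bil \<beta> \<Longrightarrow> clinear (tlift \<beta>)"
  by (simp add: clinear_def tlift_add tlift_scale)

lemma sum_list_map_add_hom: assumes "\<And>a b. L (a + b) = L a + L b"
  shows "L (sum_list xs) = sum_list (map L (xs::'a::ab_group_add list)) + (0::'b::ab_group_add)"
  by (induction xs) (simp_all add: assms add_zero_map[OF assms])

lemma tlift_comp: fixes L :: "'c::ab_group_add \<Rightarrow> 'b::ab_group_add" assumes "\<And>a b. L (a + b) = L a + L b"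
  shows "L (tlift \<beta> t) = tlift (\<lambda>x y. (L (\<beta> x y) :: 'b::ab_group_add)) t"
  unfolding tlift_def' split_def using sum_list_map_add_hom[of L, OF assms]
  by (simp add: comp_def case_prod_beta)

lemma tlift_plusf: "tlift (\<lambda>x y. \<beta>1 x y + \<beta>2 x y) t = tlift \<beta>1 t + (tlift \<beta>2 t :: 'c::ab_group_add)"
  unfolding tlift_def' split_def by (simp add: sum_list_addf)

lemma tlift_zerof: "tlift (\<lambda>x y. 0) t = (0::'c::ab_group_add)"
  unfolding tlift_def' by (induction "Rep_tensor t") simp_all

lemma tlift_scalef: "tlift (\<lambda>x y. c \<cdot>\<^sub>C \<beta> x y) t = c \<cdot>\<^sub>C (tlift \<beta> t :: 'c::cvec)"
  by (subst tlift_comp[of "\<lambda>x. c \<cdot>\<^sub>C x"]) (simp_all add: cscale_add_right)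

lemma tlift_sumf: "tlift (\<lambda>x y. sum_list (map (\<lambda>i. \<beta> i x y) ixs)) t = sum_list (map (\<lambda>i. tlift (\<beta> i) t :: 'c::ab_group_add) ixs)"
  by (induction ixs) (simp_all add: tlift_plusf tlift_zerof)

lemma sum_list_swap: fixes f :: "'a \<Rightarrow> 'b \<Rightarrow> 'c::ab_group_add"
  shows "sum_list (map (\<lambda>p. sum_list (map (\<lambda>q. f p q) ys)) xs)
    = sum_list (map (\<lambda>q. sum_list (map (\<lambda>p. f p q) xs)) ys)"
  by (induction xs) (simp_all add: sum_list_addf)

lemma tlift_swap: fixes \<gamma> :: "'a::{zero,plus,cscale} \<Rightarrow> 'b::{zero,plus,cscale} \<Rightarrow> 'd::{zero,plus,cscale} \<Rightarrow> 'e::{zero,plus,cscale} \<Rightarrow> 'c::ab_group_add"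
  shows "tlift (\<lambda>x y. tlift (\<lambda>u z. \<gamma> x y u z) t2) t1 = tlift (\<lambda>u z. tlift (\<lambda>x y. \<gamma> x y u z) t1) t2"
  unfolding tlift_def' split_def by (rule sum_list_swap)

lemma tlift_cong: "(\<And>x y. \<beta> x y = \<gamma> x y) \<Longrightarrow> tlift \<beta> t = tlift \<gamma> t"
proof -
  assume "\<And>x y. \<beta> x y = \<gamma> x y"
  then have "\<beta> = \<gamma>" by (intro ext)
  then show ?thesis by simp
qed

lemma bil_tens: "bil tens"
proof (rule bilI)
  fix x x' :: "'a::cvec" and y y' :: "'b::cvec" and c :: complex
  show "tens (x + x') y = tens x y + tens x' y" by (simp add: tens_def plus_Abs Abs_eq_iff teq_add_l)
  show "tens x (y + y') = tens x y + tens x y'" by (simp add: tens_def plus_Abs Abs_eq_iff teq_add_r)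
  show "tens (c \<cdot>\<^sub>C x) y = c \<cdot>\<^sub>C tens x y" by (simp add: tens_def cscale_Abs mapc_def)
  show "tens x (c \<cdot>\<^sub>C y) = c \<cdot>\<^sub>C tens x y" by (simp add: tens_def cscale_Abs mapc_def Abs_eq_iff teq_bal teq_sym)
qed

lemmas tens_simps = bilD[OF bil_tens] bil_zero[OF bil_tens]

lemma Abs_sum: "Abs_tensor xs = sum_list (map (case_prod tens) xs)"
proof (induction xs)
  case Nil then show ?case by (simp add: zero_tensor_def)
next
  case (Cons a xs)
  obtain x y where a: "a = (x, y)" by force
  have "Abs_tensor (a # xs) = Abs_tensor [a] + Abs_tensor xs" by (rule Abs_Cons)
  then show ?case using Cons.IH by (simp add: a tens_def)
qed

lemma tlift_tens_id: "tlift tens t = (t::('a::cvec,'b::cvec) tensor)"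
  by (simp only: tlift_def' Abs_sum[symmetric] abs_rep_t)

lemma tensor_induct:
  fixes t :: "('a::cvec,'b::cvec) tensor"
  assumes "P 0" "\<And>v w. P (tens v w)" "\<And>s t. P s \<Longrightarrow> P t \<Longrightarrow> P (s + t)"
  shows "P t"
proof -
  have "P (sum_list (map (case_prod tens) xs))" for xs
    by (induction xs) (auto intro: assms)
  then show ?thesis by (metis Abs_sum abs_rep_t)
qed

lemma tlift_tmap: "bil \<beta> \<Longrightarrow> tlift \<beta> (tmap f g t) = tlift (\<lambda>x y. \<beta> (f x) (g y)) t"
  unfolding tmap_def by (subst tlift_comp[of "tlift \<beta>"]) (simp_all add: tlift_add)

lemma tlift_tassoc: "bil \<beta> \<Longrightarrow> tlift \<beta> (tassoc t) = tlift (\<lambda>s z. tlift (\<lambda>x y. \<beta> x (tens y z)) s) t"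
  unfolding tassoc_def
  apply (subst tlift_comp[of "tlift \<beta>"]) apply (simp add: tlift_add)
  apply (subst tlift_comp[of "tlift \<beta>"]) apply (simp add: tlift_add)
  by simp

lemma tmap_tens: "clinear (f::'a::cvec \<Rightarrow> 'c::cvec) \<Longrightarrow> clinear (g::'b::cvec \<Rightarrow> 'd::cvec) \<Longrightarrow> tmap f g (tens x y) = tens (f x) (g y)"
  unfolding tmap_def by (rule tlift_tens) (simp add: bil_def clinear_def tens_simps)

lemma bil_tmap: "clinear (f::'a::cvec \<Rightarrow> 'c::cvec) \<Longrightarrow> clinear (g::'b::cvec \<Rightarrow> 'd::cvec) \<Longrightarrow> bil (\<lambda>x y. tens (f x) (g y))"
  by (simp add: bil_def clinear_def tens_simps)

lemma clinear_tmap: "clinear (f::'a::cvec \<Rightarrow> 'c::cvec) \<Longrightarrow> clinear (g::'b::cvec \<Rightarrow> 'd::cvec) \<Longrightarrow> clinear (tmap f g)"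
  unfolding tmap_def by (rule clinear_tlift, rule bil_tmap)

lemma clinear_tliftf: "(\<And>x y. clinear (K x y :: 'z::cvec \<Rightarrow> 'r::cvec)) \<Longrightarrow> clinear (\<lambda>z. tlift (\<lambda>x y. K x y z) t)"
  by (rule clinearI) (simp_all add: clinearD tlift_plusf tlift_scalef)

lemma bil_tl1: assumes "\<And>z. bil (\<lambda>x y. K x y z)" "\<And>x y. clinear (K x y)"
  shows "bil (\<lambda>t z. tlift (\<lambda>x y. K x y z) t)"
  by (rule bilI) (simp_all add: tlift_add[OF assms(1)] tlift_scale[OF assms(1)] clinearD[OF assms(2)]
      tlift_plusf tlift_scalef)

lemma bil_tl2: assumes "\<And>x. bil (\<lambda>y z. K x y z)" "\<And>y z. clinear (\<lambda>x. K x y z)"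
  shows "bil (\<lambda>x t. tlift (\<lambda>y z. K x y z) t)"
  by (rule bilI) (simp_all add: tlift_add[OF assms(1)] tlift_scale[OF assms(1)] clinearD[OF assms(2)]
      tlift_plusf tlift_scalef)

lemma bil_compose: "bil \<beta> \<Longrightarrow> clinear f \<Longrightarrow> clinear g \<Longrightarrow> bil (\<lambda>x y. \<beta> (f x) (g y))"
  by (simp add: bil_def clinear_def)

lemma bil_post: "bil \<beta> \<Longrightarrow> clinear L \<Longrightarrow> bil (\<lambda>x y. L (\<beta> x y))"
  by (simp add: bil_def clinear_def)

lemma clinear_id: "clinear id" by (simp add: clinear_def)
lemma clinear_id': "clinear (\<lambda>x. x)" by (simp add: clinear_def)

lemma bil_sum: assumes "\<And>i. i \<in> set ixs \<Longrightarrow> bil (\<beta> i)"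
  shows "bil (\<lambda>x y. sum_list (map (\<lambda>i. \<beta> i x y) ixs))"
  by (rule bilI) (simp_all add: bilD[OF assms] sum_list_addf sum_list_scale cong: map_cong)





lemma coassoc_gen:
  assumes co: "right_comodule \<Delta> \<epsilon> \<rho>"
    and K1: "\<And>z. bil (\<lambda>x y. K x y z)" and K2: "\<And>x. bil (\<lambda>y z. K x y z)"
  shows "tlift (\<lambda>v0 a. tlift (\<lambda>v1 a1. K v1 a1 a) (\<rho> v0)) (\<rho> v)
       = tlift (\<lambda>v0 a. tlift (\<lambda>a1 a2. K v0 a1 a2) (\<Delta> a)) (\<rho> v)"
proof -
  have lin2: "clinear (K x y)" for x y using K2[of x] unfolding bil_def clinear_def by blast
  have lin1: "clinear (\<lambda>x. K x y z)" for y z using K1[of z] unfolding bil_def clinear_def by blast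
  define \<beta> where "\<beta> = (\<lambda>t a. tlift (\<lambda>v1 a1. K v1 a1 a) t)"
  have b\<beta>: "bil \<beta>" unfolding \<beta>_def by (rule bil_tl1[OF K1 lin2])
  define \<gamma> where "\<gamma> = (\<lambda>x u. tlift (\<lambda>a1 a. K x a1 a) u)"
  have b\<gamma>: "bil \<gamma>" unfolding \<gamma>_def by (rule bil_tl2[OF K2 lin1])
  have "tlift \<beta> (tmap \<rho> id (\<rho> v)) = tlift (\<lambda>x y. \<beta> (\<rho> x) (id y)) (\<rho> v)"
    by (rule tlift_tmap[OF b\<beta>])
  also have "\<dots> = tlift (\<lambda>v0 a. tlift (\<lambda>v1 a1. K v1 a1 a) (\<rho> v0)) (\<rho> v)"
    by (simp add: \<beta>_def)
  finally have 1: "tlift (\<lambda>v0 a. tlift (\<lambda>v1 a1. K v1 a1 a) (\<rho> v0)) (\<rho> v) = tlift \<beta> (tmap \<rho> id (\<rho> v))" ..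
  have 2: "tlift \<beta> X = tlift \<gamma> (tassoc X)" for X
  proof -
    have "tlift \<gamma> (tassoc X) = tlift (\<lambda>s z. tlift (\<lambda>x y. \<gamma> x (tens y z)) s) X"
      by (rule tlift_tassoc[OF b\<gamma>])
    also have "\<dots> = tlift \<beta> X"
      unfolding \<gamma>_def \<beta>_def using K2 by simp
    finally show ?thesis ..
  qed
  have "tlift (\<lambda>v0 a. tlift (\<lambda>v1 a1. K v1 a1 a) (\<rho> v0)) (\<rho> v) = tlift \<gamma> (tassoc (tmap \<rho> id (\<rho> v)))"
    by (simp only: 1 2)
  also have "\<dots> = tlift \<gamma> (tmap id \<Delta> (\<rho> v))"
    using co unfolding right_comodule_def by simp
  also have "\<dots> = tlift (\<lambda>x y. \<gamma> (id x) (\<Delta> y)) (\<rho> v)"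
    by (rule tlift_tmap[OF b\<gamma>])
  also have "\<dots> = tlift (\<lambda>v0 a. tlift (\<lambda>a1 a2. K v0 a1 a2) (\<Delta> a)) (\<rho> v)"
    by (simp add: \<gamma>_def)
  finally show ?thesis .
qed




locale setting =
  fixes \<Delta> :: "'a::calg \<Rightarrow> ('a, 'a) tensor" and \<epsilon> :: "'a \<Rightarrow> complex" and S star :: "'a \<Rightarrow> 'a"
    and B :: "'a set"
    and \<pi>C :: "'a \<Rightarrow> 'c::cvec" and \<Delta>C :: "'c \<Rightarrow> ('c, 'c) tensor" and \<epsilon>C :: "'c \<Rightarrow> complex"
    and actC :: "'a \<Rightarrow> 'c \<Rightarrow> 'c"
    and actV :: "'a \<Rightarrow> 'v::cvec \<Rightarrow> 'v" and \<rho>V :: "'v \<Rightarrow> ('v, 'a) tensor"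
    and actW :: "'a \<Rightarrow> 'w::cvec \<Rightarrow> 'w" and \<rho>W :: "'w \<Rightarrow> ('w, 'c) tensor"
  assumes H1: "cqg_hopf_star_algebra \<Delta> \<epsilon> S star"
    and H2: "right_coideal_star_subalgebra \<Delta> star B"
    and H3: "quotient_coalgebra \<Delta> \<epsilon> B \<pi>C \<Delta>C \<epsilon>C actC"
    and H4: "Mod_BA \<Delta> \<epsilon> B actV \<rho>V"
    and H5: "Mod_AC \<Delta> \<Delta>C \<epsilon>C actC actW \<rho>W"
begin

lemma hopf: "hopf_algebra \<Delta> \<epsilon> S"
  using H1 unfolding cqg_hopf_star_algebra_def star_hopf_algebra_def by blast

lemma S_lin: "clinear S" using hopf unfolding hopf_algebra_def by blast
lemma antipode1: "tlift (\<lambda>a b. S a * b) (\<Delta> x) = \<epsilon> x \<cdot>\<^sub>C 1"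
  using hopf unfolding hopf_algebra_def by blast
lemma antipode2: "tlift (\<lambda>a b. a * S b) (\<Delta> x) = \<epsilon> x \<cdot>\<^sub>C 1"
  using hopf unfolding hopf_algebra_def by blast

lemma crep_B: "b \<in> B \<Longrightarrow> set (map fst (crep B \<Delta> b)) \<subseteq> B"
proof -
  assume "b \<in> B"
  then have "in_B_odot_A B (\<Delta> b)" using H2 unfolding right_coideal_star_subalgebra_def by blast
  then have "\<exists>xs. set (map fst xs) \<subseteq> B \<and> \<Delta> b = Abs_tensor xs" unfolding in_B_odot_A_def by blast
  then show ?thesis unfolding crep_def by (rule someI2_ex) blast
qed

lemma pi_lin: "clinear \<pi>C" and pi_surj: "surj \<pi>C" and actC_pi: "actC a (\<pi>C a') = \<pi>C (a * a')"
  using H3 unfolding quotient_coalgebra_def by blast+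

lemma V_mod: "left_B_module B actV" and V_co: "right_comodule \<Delta> \<epsilon> \<rho>V"
  and V_compat: "b \<in> B \<Longrightarrow> \<rho>V (actV b v) =
        lsum (map (\<lambda>(b1, b2). tlift (\<lambda>v0 a. tens (actV b1 v0) (b2 * a)) (\<rho>V v)) (crep B \<Delta> b))"
  using H4 unfolding Mod_BA_def by blast+

lemma W_mod: "left_B_module UNIV actW" and W_co: "right_C_comodule \<Delta>C \<epsilon>C \<rho>W"
  and W_compat: "\<rho>W (actW a w) = tlift (\<lambda>a1 a2. tlift (\<lambda>w0 c. tens (actW a1 w0) (actC a2 c)) (\<rho>W w)) (\<Delta> a)"
  using H5 unfolding Mod_AC_def by blast+

lemma V_lin: "b \<in> B \<Longrightarrow> clinear (actV b)" using V_mod unfolding left_B_module_def by blast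
lemma V_simps: "b \<in> B \<Longrightarrow> actV b (x + y) = actV b x + actV b y"
   "b \<in> B \<Longrightarrow> actV b (c \<cdot>\<^sub>C x) = c \<cdot>\<^sub>C actV b x"
  using V_lin clinearD by blast+

lemma rhoV_lin: "clinear \<rho>V" using V_co unfolding right_comodule_def by blast
lemma rhoV_counit: "tlift (\<lambda>v0 x. \<epsilon> x \<cdot>\<^sub>C v0) (\<rho>V v) = v" using V_co unfolding right_comodule_def by blast
lemma rhoW_lin: "clinear \<rho>W" using W_co unfolding right_C_comodule_def by blast

lemma W_simps:
  "actW a (x + y) = actW a x + actW a y"
  "actW a (c \<cdot>\<^sub>C x) = c \<cdot>\<^sub>C actW a x"
  "actW (a + a') x = actW a x + actW a' x"
  "actW (c \<cdot>\<^sub>C a) x = c \<cdot>\<^sub>C actW a x"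
  "actW (a * a') x = actW a (actW a' x)"
  "actW 1 x = x"
  using W_mod unfolding left_B_module_def clinear_def by blast+

lemma C_simps:
  "actC a (x + y) = actC a x + actC a y"
  "actC a (c \<cdot>\<^sub>C x) = c \<cdot>\<^sub>C actC a x"
  "actC (a + a') x = actC a x + actC a' x"
  "actC (c \<cdot>\<^sub>C a) x = c \<cdot>\<^sub>C actC a x"
proof -
  obtain p where p: "x = \<pi>C p" using pi_surj by (metis surjD)
  obtain q where q: "y = \<pi>C q" using pi_surj by (metis surjD)
  show "actC a (x + y) = actC a x + actC a y"
    by (simp add: p q actC_pi clinearD[OF pi_lin, symmetric] distrib_left)
  show "actC a (c \<cdot>\<^sub>C x) = c \<cdot>\<^sub>C actC a x"
    by (simp add: p actC_pi clinearD[OF pi_lin, symmetric] cscale_mult_right)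
  show "actC (a + a') x = actC a x + actC a' x"
    by (simp add: p actC_pi clinearD[OF pi_lin, symmetric] distrib_right)
  show "actC (c \<cdot>\<^sub>C a) x = c \<cdot>\<^sub>C actC a x"
    by (simp add: p actC_pi clinearD[OF pi_lin, symmetric] cscale_mult_left)
qed

lemma S_simps: "S (x + y) = S x + S y" "S (c \<cdot>\<^sub>C x) = c \<cdot>\<^sub>C S x"
  using clinearD[OF S_lin] by blast+

lemma mult_sc: "(c \<cdot>\<^sub>C x) * y = c \<cdot>\<^sub>C (x * (y::'a))" "x * (c \<cdot>\<^sub>C y) = c \<cdot>\<^sub>C (x * (y::'a))"
  by (simp_all only: cscale_mult_left[symmetric] cscale_mult_right[symmetric])

lemmas rhoV_simps = clinearD[OF rhoV_lin]
lemmas rhoW_simps = clinearD[OF rhoW_lin]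

lemmas alls = W_simps C_simps S_simps mult_sc distrib_left distrib_right tens_simps

end



context setting begin

lemma bil_Iw: "bil (\<lambda>v0 a. tens v0 (actW a w))" by (rule bilI) (simp_all add: alls)
lemma bil_Jw: "bil (\<lambda>v0 a. tens v0 (actW (S a) w))" by (rule bilI) (simp_all add: alls)

definition "Fb v w = tlift (\<lambda>v0 a. tens v0 (actW a w)) (\<rho>V v)"
definition "Gb v w = tlift (\<lambda>v0 a. tens v0 (actW (S a) w)) (\<rho>V v)"

lemma bil_Fb: "bil Fb" unfolding Fb_def
  by (rule bilI) (simp_all add: alls rhoV_simps tlift_add tlift_scale bil_Iw tlift_plusf tlift_scalef)
lemma bil_Gb: "bil Gb" unfolding Gb_def
  by (rule bilI) (simp_all add: alls rhoV_simps tlift_add tlift_scale bil_Jw tlift_plusf tlift_scalef)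

definition "ff = tlift Fb"
definition "gg = tlift Gb"

lemma ff_lin: "clinear ff" unfolding ff_def by (rule clinear_tlift[OF bil_Fb])
lemma gg_lin: "clinear gg" unfolding gg_def by (rule clinear_tlift[OF bil_Gb])
lemma ff_tens: "ff (tens v w) = Fb v w" unfolding ff_def by (rule tlift_tens[OF bil_Fb])
lemma gg_tens: "gg (tens v w) = Gb v w" unfolding gg_def by (rule tlift_tens[OF bil_Gb])
lemmas ff_simps = clinearD[OF ff_lin]
lemmas gg_simps = clinearD[OF gg_lin]

lemma finish:
  assumes P: "\<And>a. tlift (\<lambda>a1 a2. P a1 a2) (\<Delta> a) = \<epsilon> a \<cdot>\<^sub>C 1"
  shows "tlift (\<lambda>v0 a. tlift (\<lambda>a1 a2. tens v0 (actW (P a1 a2) w)) (\<Delta> a)) (\<rho>V v) = tens v w"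
proof -
  have 1: "tlift (\<lambda>a1 a2. tens v0 (actW (P a1 a2) w)) (\<Delta> a) = tens v0 (actW (\<epsilon> a \<cdot>\<^sub>C 1) w)" for v0 :: 'v and a
  proof -
    have "tens v0 (actW (tlift P (\<Delta> a)) w) = tlift (\<lambda>a1 a2. tens v0 (actW (P a1 a2) w)) (\<Delta> a)"
      by (rule tlift_comp[of "\<lambda>x. tens v0 (actW x w)"]) (simp add: alls)
    then show ?thesis using P[of a] by simp
  qed
  have "tlift (\<lambda>v0 a. tlift (\<lambda>a1 a2. tens v0 (actW (P a1 a2) w)) (\<Delta> a)) (\<rho>V v)
      = tlift (\<lambda>v0 a. tens (\<epsilon> a \<cdot>\<^sub>C v0) w) (\<rho>V v)"
    by (simp add: 1 alls)
  also have "\<dots> = tens (tlift (\<lambda>v0 a. \<epsilon> a \<cdot>\<^sub>C v0) (\<rho>V v)) w"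
    by (rule tlift_comp[of "\<lambda>x. tens x w", symmetric]) (simp add: alls)
  also have "\<dots> = tens v w" by (simp add: rhoV_counit)
  finally show ?thesis .
qed

lemma gf_tens: "gg (ff (tens v w)) = tens v w"
proof -
  have "gg (ff (tens v w)) = tlift (\<lambda>v0 a. gg (tens v0 (actW a w))) (\<rho>V v)"
    unfolding ff_tens Fb_def by (rule tlift_comp) (simp add: gg_simps)
  also have "\<dots> = tlift (\<lambda>v0 a. tlift (\<lambda>v1 a1. tens v1 (actW (S a1) (actW a w))) (\<rho>V v0)) (\<rho>V v)"
    by (simp add: gg_tens Gb_def)
  also have "\<dots> = tlift (\<lambda>v0 a. tlift (\<lambda>a1 a2. tens v0 (actW (S a1) (actW a2 w))) (\<Delta> a)) (\<rho>V v)"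
    by (rule coassoc_gen[OF V_co]) (rule bilI; simp add: alls)+
  also have "\<dots> = tlift (\<lambda>v0 a. tlift (\<lambda>a1 a2. tens v0 (actW (S a1 * a2) w)) (\<Delta> a)) (\<rho>V v)"
    by (simp only: W_simps(5))
  also have "\<dots> = tens v w" by (rule finish[OF antipode1])
  finally show ?thesis .
qed

lemma fg_tens: "ff (gg (tens v w)) = tens v w"
proof -
  have "ff (gg (tens v w)) = tlift (\<lambda>v0 a. ff (tens v0 (actW (S a) w))) (\<rho>V v)"
    unfolding gg_tens Gb_def by (rule tlift_comp) (simp add: ff_simps)
  also have "\<dots> = tlift (\<lambda>v0 a. tlift (\<lambda>v1 a1. tens v1 (actW a1 (actW (S a) w))) (\<rho>V v0)) (\<rho>V v)"
    by (simp add: ff_tens Fb_def)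
  also have "\<dots> = tlift (\<lambda>v0 a. tlift (\<lambda>a1 a2. tens v0 (actW a1 (actW (S a2) w))) (\<Delta> a)) (\<rho>V v)"
    by (rule coassoc_gen[OF V_co]) (rule bilI; simp add: alls)+
  also have "\<dots> = tlift (\<lambda>v0 a. tlift (\<lambda>a1 a2. tens v0 (actW (a1 * S a2) w)) (\<Delta> a)) (\<rho>V v)"
    by (simp only: W_simps(5))
  also have "\<dots> = tens v w" by (rule finish[OF antipode2])
  finally show ?thesis .
qed

end



context setting begin

lemma bil_indV: "b \<in> B \<Longrightarrow> bil (\<lambda>v (w::'w). tens (actV b v) w)"
  by (rule bilI) (simp_all add: alls V_simps)

lemma indV_tens: "b \<in> B \<Longrightarrow> indV_act actV b (tens v (w::'w)) = tens (actV b v) w"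
  unfolding indV_act_def by (rule tlift_tens[OF bil_indV])

lemma bil_indW: "b \<in> B \<Longrightarrow>
   bil (\<lambda>v w. sum_list (map (\<lambda>(b1, b2). tens (actV b1 v) (actW b2 w)) (crep B \<Delta> b)))"
proof -
  assume b: "b \<in> B"
  have "bil (\<lambda>v w. sum_list (map (\<lambda>i. (case i of (b1, b2) \<Rightarrow> tens (actV b1 v) (actW b2 w))) (crep B \<Delta> b)))"
  proof (rule bil_sum)
    fix i assume i: "i \<in> set (crep B \<Delta> b)"
    obtain b1 b2 where i': "i = (b1, b2)" by force
    have "b1 \<in> B" using crep_B[OF b] i i' by force
    then show "bil (\<lambda>v w. case i of (b1, b2) \<Rightarrow> tens (actV b1 v) (actW b2 w))"
      unfolding i' by (intro bilI) (simp_all add: alls V_simps)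
  qed
  then show ?thesis by simp
qed

lemma indW_add: "b \<in> B \<Longrightarrow> indW_act B \<Delta> actV actW b (x + y) = indW_act B \<Delta> actV actW b x + indW_act B \<Delta> actV actW b y"
  unfolding indW_act_def lsum_eq by (rule tlift_add[OF bil_indW])

lemma indW_tens: "b \<in> B \<Longrightarrow> indW_act B \<Delta> actV actW b (tens v w) =
   sum_list (map (\<lambda>(b1, b2). tens (actV b1 v) (actW b2 w)) (crep B \<Delta> b))"
  unfolding indW_act_def lsum_eq by (rule tlift_tens[OF bil_indW])

lemma mod_tens:
  assumes b: "b \<in> B"
  shows "ff (indV_act actV b (tens v w)) = indW_act B \<Delta> actV actW b (ff (tens v w))"
proof -
  let ?I = "tlift (\<lambda>(v0::'v) a. tens v0 (actW a w))"
  have L_add: "?I (x + y) = ?I x + ?I y" for x y by (rule tlift_add[OF bil_Iw])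
  have inner: "?I (tlift (\<lambda>v0 a. tens (actV b1 v0) (b2 * a)) (\<rho>V v))
      = tlift (\<lambda>v0 a. tens (actV b1 v0) (actW (b2 * a) w)) (\<rho>V v)" for b1 b2
    by (subst tlift_comp[OF L_add]) (simp add: bil_Iw)
  have "ff (indV_act actV b (tens v w)) = ?I (\<rho>V (actV b v))"
    by (simp add: indV_tens[OF b] ff_tens Fb_def)
  also have "\<dots> = sum_list (map (\<lambda>p. tlift (\<lambda>v0 a. tens (actV (fst p) v0) (actW (snd p * a) w)) (\<rho>V v)) (crep B \<Delta> b))"
    unfolding V_compat[OF b] lsum_eq sum_list_map_add_hom[of ?I, OF L_add] by (simp add: split_def inner comp_def)
  also have "\<dots> = tlift (\<lambda>v0 a. sum_list (map (\<lambda>p. tens (actV (fst p) v0) (actW (snd p) (actW a w))) (crep B \<Delta> b))) (\<rho>V v)"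
    by (simp add: tlift_sumf W_simps(5))
  also have "\<dots> = tlift (\<lambda>v0 a. indW_act B \<Delta> actV actW b (tens v0 (actW a w))) (\<rho>V v)"
    by (simp add: indW_tens[OF b] split_def)
  also have "\<dots> = indW_act B \<Delta> actV actW b (ff (tens v w))"
    unfolding ff_tens Fb_def by (rule tlift_comp[symmetric]) (rule indW_add[OF b])
  finally show ?thesis .
qed


lemma bil_c1: "bil (\<lambda>(w0::'w) c. tens (tens (v0::'v) w0) (actC a c))"
  by (rule bilI) (simp_all add: alls)
lemma bil_c2: "bil (\<lambda>(v0::'v) a. tlift (\<lambda>(w0::'w) c. tens (tens v0 w0) (actC a c)) (\<rho>W w))"
  by (rule bilI) (simp_all add: alls tlift_plusf tlift_scalef)
lemma bil_c3: "bil (\<lambda>(w0::'w) c. tens (tens (v0::'v) w0) c)"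
  by (rule bilI) (simp_all add: alls)

lemma bil_coV: "bil (\<lambda>(v::'v) (w::'w). tlift (\<lambda>v0 a. tlift (\<lambda>w0 c. tens (tens v0 w0) (actC a c)) (\<rho>W w)) (\<rho>V v))"
  by (rule bilI) (simp_all add: alls rhoV_simps rhoW_simps tlift_add tlift_scale bil_c1 bil_c2 tlift_plusf tlift_scalef)

lemma bil_coW: "bil (\<lambda>(v::'v) (w::'w). tlift (\<lambda>w0 c. tens (tens v w0) c) (\<rho>W w))"
  by (rule bilI) (simp_all add: alls rhoW_simps tlift_add tlift_scale bil_c3 tlift_plusf tlift_scalef)

lemma coV_tens: "indV_coact \<rho>V \<rho>W actC (tens v w) = tlift (\<lambda>v0 a. tlift (\<lambda>w0 c. tens (tens v0 w0) (actC a c)) (\<rho>W w)) (\<rho>V v)"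
  unfolding indV_coact_def by (rule tlift_tens[OF bil_coV])
lemma coW_tens: "indW_coact \<rho>W (tens (v::'v) (w::'w)) = tlift (\<lambda>w0 c. tens (tens v w0) c) (\<rho>W w)"
  unfolding indW_coact_def by (rule tlift_tens[OF bil_coW])
lemma coV_lin: "clinear (indV_coact \<rho>V \<rho>W actC)"
  unfolding indV_coact_def by (rule clinear_tlift[OF bil_coV])
lemma coW_lin: "clinear (indW_coact \<rho>W :: ('v,'w) tensor \<Rightarrow> _)"
  unfolding indW_coact_def by (rule clinear_tlift[OF bil_coW])

lemma co_tens:
  "indW_coact \<rho>W (ff (tens v w)) = tmap ff id (indV_coact \<rho>V \<rho>W actC (tens v w))"
proof -
  have tm_lin: "clinear (tmap ff (id::'c \<Rightarrow> 'c))" by (rule clinear_tmap[OF ff_lin clinear_id])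
  have "indW_coact \<rho>W (ff (tens v w)) = tlift (\<lambda>v0 a. indW_coact \<rho>W (tens v0 (actW a w))) (\<rho>V v)"
    unfolding ff_tens Fb_def by (rule tlift_comp) (simp add: clinearD[OF coW_lin])
  also have "\<dots> = tlift (\<lambda>v0 a. tlift (\<lambda>w0 c. tens (tens v0 w0) c)
        (tlift (\<lambda>a1 a2. tlift (\<lambda>w0 c. tens (actW a1 w0) (actC a2 c)) (\<rho>W w)) (\<Delta> a))) (\<rho>V v)"
    by (simp add: coW_tens W_compat)
  also have "\<dots> = tlift (\<lambda>v0 a. tlift (\<lambda>a1 a2. tlift (\<lambda>w0 c. tens (tens v0 (actW a1 w0)) (actC a2 c)) (\<rho>W w)) (\<Delta> a)) (\<rho>V v)"
  proof -
    have "tlift (\<lambda>w0 c. tens (tens v0 w0) c) (tlift (\<lambda>a1 a2. tlift (\<lambda>w0 c. tens (actW a1 w0) (actC a2 c)) (\<rho>W w)) (\<Delta> a))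
       = tlift (\<lambda>a1 a2. tlift (\<lambda>w0 c. tens (tens v0 (actW a1 w0)) (actC a2 c)) (\<rho>W w)) (\<Delta> a)" for v0 :: 'v and a
      apply (subst tlift_comp[of "tlift (\<lambda>w0 c. tens (tens v0 w0) c)"])
       apply (rule tlift_add[OF bil_c3])
      apply (subst tlift_comp[of "tlift (\<lambda>w0 c. tens (tens v0 w0) c)"])
       apply (rule tlift_add[OF bil_c3])
      by (simp add: bil_c3)
    then show ?thesis by simp
  qed
  finally have L: "indW_coact \<rho>W (ff (tens v w)) = \<dots>" .
  have "tmap ff id (indV_coact \<rho>V \<rho>W actC (tens v w))
     = tlift (\<lambda>v0 a. tmap ff id (tlift (\<lambda>w0 c. tens (tens v0 w0) (actC a c)) (\<rho>W w))) (\<rho>V v)"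
    unfolding coV_tens by (rule tlift_comp) (rule clinearD(1)[OF tm_lin])
  also have "\<dots> = tlift (\<lambda>v0 a. tlift (\<lambda>w0 c. tmap ff id (tens (tens v0 w0) (actC a c))) (\<rho>W w)) (\<rho>V v)"
    by (subst tlift_comp[of "tmap ff id"], rule clinearD(1)[OF tm_lin], rule refl)
  also have "\<dots> = tlift (\<lambda>v0 a. tlift (\<lambda>w0 c. tens (Fb v0 w0) (actC a c)) (\<rho>W w)) (\<rho>V v)"
    by (simp add: tmap_tens[OF ff_lin clinear_id] ff_tens)
  also have "\<dots> = tlift (\<lambda>v0 a. tlift (\<lambda>w0 c. tlift (\<lambda>v1 a1. tens (tens v1 (actW a1 w0)) (actC a c)) (\<rho>V v0)) (\<rho>W w)) (\<rho>V v)"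
  proof -
    have "tens (Fb v0 w0) X = tlift (\<lambda>v1 a1. tens (tens v1 (actW a1 w0)) X) (\<rho>V v0)" for v0 w0 and X :: 'c
      unfolding Fb_def by (rule tlift_comp[of "\<lambda>x. tens x X"]) (simp add: alls)
    then show ?thesis by simp
  qed
  also have "\<dots> = tlift (\<lambda>v0 a. tlift (\<lambda>v1 a1. tlift (\<lambda>w0 c. tens (tens v1 (actW a1 w0)) (actC a c)) (\<rho>W w)) (\<rho>V v0)) (\<rho>V v)"
    by (subst tlift_swap) (rule refl)
  also have "\<dots> = tlift (\<lambda>v0 a. tlift (\<lambda>a1 a2. tlift (\<lambda>w0 c. tens (tens v0 (actW a1 w0)) (actC a2 c)) (\<rho>W w)) (\<Delta> a)) (\<rho>V v)"
    by (rule coassoc_gen[OF V_co]) (rule bilI; simp add: alls tlift_plusf tlift_scalef)+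
  finally show ?thesis using L by simp
qed

end



context setting begin

lemma indV_add: "b \<in> B \<Longrightarrow> indV_act actV b (x + y) = indV_act actV b x + indV_act actV b (y::('v,'w) tensor)"
  unfolding indV_act_def by (rule tlift_add[OF bil_indV])
lemma indV_zero: "b \<in> B \<Longrightarrow> indV_act actV b (0::('v,'w) tensor) = 0"
  unfolding indV_act_def by (rule tlift_zero[OF bil_indV])
lemma indW_zero: "b \<in> B \<Longrightarrow> indW_act B \<Delta> actV actW b (0::('v,'w) tensor) = 0"
  unfolding indW_act_def lsum_eq by (rule tlift_zero[OF bil_indW])

lemma iso: "iso_BModC B (indV_act actV) (indV_coact \<rho>V \<rho>W actC) (indW_act B \<Delta> actV actW) (indW_coact \<rho>W)"
proof -
  have ff0: "ff 0 = 0" by (rule clinear_zero[OF ff_lin])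
  have gg0: "gg 0 = 0" by (rule clinear_zero[OF gg_lin])
  have gf: "gg (ff x) = x" for x
    by (induction x rule: tensor_induct) (simp_all add: ff0 gg0 gf_tens ff_simps gg_simps)
  have fg: "ff (gg x) = x" for x
    by (induction x rule: tensor_induct) (simp_all add: ff0 gg0 fg_tens ff_simps gg_simps)
  have md: "ff (indV_act actV b x) = indW_act B \<Delta> actV actW b (ff x)" if b: "b \<in> B" for b x
    by (induction x rule: tensor_induct)
       (simp_all add: ff0 indV_zero[OF b] indW_zero[OF b] mod_tens[OF b] ff_simps indV_add[OF b] indW_add[OF b])
  have md2: "gg (indW_act B \<Delta> actV actW b y) = indV_act actV b (gg y)" if b: "b \<in> B" for b y
    by (metis md[OF b] fg gf)
  have tm_lin: "clinear (tmap ff (id::'c \<Rightarrow> 'c))" by (rule clinear_tmap[OF ff_lin clinear_id])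
  have co: "indW_coact \<rho>W (ff x) = tmap ff id (indV_coact \<rho>V \<rho>W actC x)" for x
  proof (induction x rule: tensor_induct)
    case 1 then show ?case
      by (simp only: ff0 clinear_zero[OF coW_lin] clinear_zero[OF coV_lin] clinear_zero[OF tm_lin])
  next
    case (2 v w) then show ?case by (rule co_tens)
  next
    case (3 s t) then show ?case
      by (simp only: clinearD(1)[OF ff_lin] clinearD(1)[OF coW_lin] clinearD(1)[OF coV_lin] clinearD(1)[OF tm_lin])
  qed
  have tt: "tmap gg id (tmap ff id X) = X" for X :: "(('v,'w) tensor, 'c) tensor"
  proof -
    have "tmap gg id (tmap ff id X) = tlift (\<lambda>x y. tens (gg (ff x)) (id (id y))) X"
      unfolding tmap_def[of gg] by (rule tlift_tmap[OF bil_tmap[OF gg_lin clinear_id]])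
    also have "\<dots> = X" by (simp add: gf tlift_tens_id)
    finally show ?thesis .
  qed
  have co2: "indV_coact \<rho>V \<rho>W actC (gg y) = tmap gg id (indW_coact \<rho>W y)" for y
    by (metis co fg tt)
  show ?thesis unfolding iso_BModC_def
    by (intro exI[of _ ff] exI[of _ gg] conjI ff_lin gg_lin allI ballI gf fg md md2 co co2)
qed

end

theorem mainTheorem6:
  fixes \<Delta> :: "'a::calg \<Rightarrow> ('a, 'a) tensor" and \<epsilon> :: "'a \<Rightarrow> complex" and S star :: "'a \<Rightarrow> 'a"
    and B :: "'a set"
    and \<pi>C :: "'a \<Rightarrow> 'c::cvec" and \<Delta>C :: "'c \<Rightarrow> ('c, 'c) tensor" and \<epsilon>C :: "'c \<Rightarrow> complex"
    and actC :: "'a \<Rightarrow> 'c \<Rightarrow> 'c"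
    and actV :: "'a \<Rightarrow> 'v::cvec \<Rightarrow> 'v" and \<rho>V :: "'v \<Rightarrow> ('v, 'a) tensor"
    and actW :: "'a \<Rightarrow> 'w::cvec \<Rightarrow> 'w" and \<rho>W :: "'w \<Rightarrow> ('w, 'c) tensor"
  assumes "cqg_hopf_star_algebra \<Delta> \<epsilon> S star"
    and "right_coideal_star_subalgebra \<Delta> star B"
    and "quotient_coalgebra \<Delta> \<epsilon> B \<pi>C \<Delta>C \<epsilon>C actC"
    and "Mod_BA \<Delta> \<epsilon> B actV \<rho>V"
    and "Mod_AC \<Delta> \<Delta>C \<epsilon>C actC actW \<rho>W"
  shows "iso_BModC B (indV_act actV) (indV_coact \<rho>V \<rho>W actC)
                     (indW_act B \<Delta> actV actW) (indW_coact \<rho>W)"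
proof -
  interpret setting \<Delta> \<epsilon> S star B \<pi>C \<Delta>C \<epsilon>C actC actV \<rho>V actW \<rho>W
    using assms by (unfold_locales) blast+
  show ?thesis by (rule iso)
qed


end
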